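(* Let $p=n^{\delta-1}$ with $0<\delta<1$, let $H$ be a graph on $m$ vertices with $m$ dividing $n$, and let $k'\le m$, $k'\le k\le n-m$ with $k-k'\ge 6n^{1-\delta}\log n$. Let $\tilde G_H\sim G_H(n,p,k)$, with planted vertex set $M$ and planted independent set $I'$ of size $k-k'$ among the vertices having no neighbor in $M$. For every integer $t$ with $1\le t\le\frac{k-k'}{2}$, with probability at least $1-2/n$, every set $Q\subset V\setminus(M\cup I')$ of vertices of $\tilde G_H[V\setminus M]$ with $|Q|=t<k-k'$ has at least $t+1$ neighbors in $I'$.
   Context: $G(n,p)$ is the Erdős–Rényi random graph on $V=[n]$. With $H$ on vertex set $[m]$, partition $[n]$ into parts $P_i=\{(i-1)\frac nm+1,\dots,i\frac nm\}$. Distribution $G_H(n,p,k)$: sample $G'\sim G(n,p)$; choose a uniformly random $M=\{v_1,\dots,v_m\}$ with $v_i\in P_i$ and replace $G'[M]$ by a copy of $H$ with vertex $i$ at $v_i$, giving $G_H$; among the vertices of $G_H$ with no neighbor in $M$, choose a uniformly random set $I'$ of size $k-k'$ and delete all edges inside $I'$, giving $\tilde G_H$ (if fewer than $k-k'$ such vertices exist, instead delete all edges inside a uniformly random set of $k$ vertices of $G_H$). *)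

theory Defs
  imports "HOL-Probability.Probability"
begin

text \<open>Graphs on a vertex set are represented by their edge sets: sets of 2-element sets.
  Vertices are 0..n-1 (0-based version of [n]); H lives on 0..m-1.\<close>

definition all_edges :: "nat set \<Rightarrow> nat set set" where
  "all_edges V = {e. \<exists>u v. u \<in> V \<and> v \<in> V \<and> u \<noteq> v \<and> e = {u, v}}"

definition gnp_pmf :: "nat \<Rightarrow> real \<Rightarrow> nat set set pmf" where
  "gnp_pmf n p = map_pmf (\<lambda>f. {e \<in> all_edges {0..<n}. f e})
      (Pi_pmf (all_edges {0..<n}) False (\<lambda>_. bernoulli_pmf p))"

definition part :: "nat \<Rightarrow> nat \<Rightarrow> nat \<Rightarrow> nat set" where
  "part n m i = {i * (n div m) ..< (Suc i) * (n div m)}"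

text \<open>Replace G'[M] by a copy of H with vertex i placed at v i.\<close>
definition plant :: "nat \<Rightarrow> nat set set \<Rightarrow> (nat \<Rightarrow> nat) \<Rightarrow> nat set set \<Rightarrow> nat set set" where
  "plant m H v E = {e \<in> E. \<not> e \<subseteq> v ` {0..<m}} \<union> (\<lambda>e. v ` e) ` H"

definition no_nbr :: "nat \<Rightarrow> nat set set \<Rightarrow> nat set \<Rightarrow> nat set" where
  "no_nbr n E M = {u \<in> {0..<n}. \<forall>w \<in> M. {u, w} \<notin> E}"

definition Iset_pmf :: "nat \<Rightarrow> nat \<Rightarrow> nat \<Rightarrow> nat set \<Rightarrow> nat set pmf" where
  "Iset_pmf n k k' W =
     (if k - k' \<le> card W then pmf_of_set {S. S \<subseteq> W \<and> card S = k - k'}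
      else pmf_of_set {S. S \<subseteq> {0..<n} \<and> card S = k})"

definition delete_inside :: "nat set set \<Rightarrow> nat set \<Rightarrow> nat set set" where
  "delete_inside E I = {e \<in> E. \<not> e \<subseteq> I}"

definition GH_pmf :: "nat \<Rightarrow> nat \<Rightarrow> nat set set \<Rightarrow> real \<Rightarrow> nat \<Rightarrow> nat \<Rightarrow>
    (nat set set \<times> nat set \<times> nat set) pmf" where
  "GH_pmf n m H p k k' =
     bind_pmf (gnp_pmf n p) (\<lambda>E'.
     bind_pmf (pmf_of_set (PiE {0..<m} (part n m))) (\<lambda>v.
       let M = v ` {0..<m}; EH = plant m H v E' in
       bind_pmf (Iset_pmf n k k' (no_nbr n EH M)) (\<lambda>I.
         return_pmf (delete_inside EH I, M, I))))"

end

theory Submission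
  imports Defs
begin


lemma gnp_indep:
  fixes F :: "nat set set \<Rightarrow> ennreal"
  assumes D: "D \<subseteq> all_edges {0..<n}" and p: "0 \<le> p" "p \<le> 1"
    and F: "\<And>E. F E = F (E - D)"
  shows "(\<integral>\<^sup>+E. F E * indicator {E. E \<inter> D = {}} E \<partial>gnp_pmf n p)
       = (\<integral>\<^sup>+E. F E \<partial>gnp_pmf n p) * ennreal ((1-p) ^ card D)"
proof -
  define A where "A = all_edges {0..<n}"
  have finA: "finite A" unfolding A_def all_edges_def
    by (rule finite_subset[of _ "Pow {0..<n}"]) auto
  have finD: "finite D" using D finA A_def finite_subset by blast
  have AU: "A = (A - D) \<union> D" using D A_def by auto
  define h where "h = (\<lambda>(f::nat set \<Rightarrow> bool,g::nat set \<Rightarrow> bool) x. if x \<in> A - D then f x else g x)"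
  have PU: "Pi_pmf A False (\<lambda>_. bernoulli_pmf p) = map_pmf h (pair_pmf (Pi_pmf (A - D) False (\<lambda>_. bernoulli_pmf p)) (Pi_pmf D False (\<lambda>_. bernoulli_pmf p)))"
    unfolding h_def by (subst AU, rule Pi_pmf_union) (use finA finD in auto)
  have e1: "{e \<in> A. h (f, g) e} - D = {e \<in> A - D. f e}" for f g
    unfolding h_def by auto
  have e2: "({e \<in> A. h (f, g) e} \<inter> D = {}) = (g \<in> Pi D (\<lambda>_. {False}))" for f g
    unfolding h_def using D A_def by auto
  have pr: "emeasure (measure_pmf (Pi_pmf D False (\<lambda>_. bernoulli_pmf p))) (Pi D (\<lambda>_. {False})) = ennreal ((1-p) ^ card D)"
    using finD p by (simp add: measure_pmf.emeasure_eq_measure measure_Pi_pmf_Pi measure_pmf_single)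
  have "(\<integral>\<^sup>+E. F E * indicator {E. E \<inter> D = {}} E \<partial>gnp_pmf n p)
     = (\<integral>\<^sup>+f. \<integral>\<^sup>+g. F {e \<in> A - D. f e} * indicator (Pi D (\<lambda>_. {False})) g
         \<partial>Pi_pmf D False (\<lambda>_. bernoulli_pmf p) \<partial>Pi_pmf (A - D) False (\<lambda>_. bernoulli_pmf p))"
    unfolding gnp_pmf_def A_def[symmetric] PU
    by (simp add: nn_integral_pair_pmf' indicator_def e2 F[of "{e \<in> A. h _ e}"] e1 del: Pi_iff)
  also have "\<dots> = (\<integral>\<^sup>+f. F {e \<in> A - D. f e} * ennreal ((1-p) ^ card D) \<partial>Pi_pmf (A - D) False (\<lambda>_. bernoulli_pmf p))"
    by (simp add: nn_integral_cmult pr)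
  also have "\<dots> = (\<integral>\<^sup>+f. F {e \<in> A - D. f e} \<partial>Pi_pmf (A - D) False (\<lambda>_. bernoulli_pmf p)) * ennreal ((1-p) ^ card D)"
    by (simp add: nn_integral_multc)
  also have "(\<integral>\<^sup>+f. F {e \<in> A - D. f e} \<partial>Pi_pmf (A - D) False (\<lambda>_. bernoulli_pmf p)) = (\<integral>\<^sup>+E. F E \<partial>gnp_pmf n p)"
    unfolding gnp_pmf_def A_def[symmetric] PU
    by (simp add: nn_integral_pair_pmf' F[of "{e \<in> A. h _ e}"] e1 measure_pmf.emeasure_space_1)
  finally show ?thesis .
qed


lemma div_nat_anti:
  assumes "0 < b" "b \<le> a"
  shows "(x::ennreal) / of_nat a \<le> x / of_nat b"
proof -
  have "inverse (of_nat a::ennreal) \<le> inverse (of_nat b)"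
    using assms by (simp add: ennreal_of_nat_eq_real_of_nat inverse_ennreal le_imp_inverse_le)
  then show ?thesis by (simp add: divide_ennreal_def mult_left_mono)
qed

lemma subsets_ne:
  assumes "finite W" "s \<le> card W"
  shows "{S. S \<subseteq> W \<and> card S = s} \<noteq> {}" "finite {S. S \<subseteq> W \<and> card S = s}"
proof -
  obtain S where "S \<subseteq> W" "card S = s" using obtain_subset_with_card_n[OF assms(2)] by metis
  then show "{S. S \<subseteq> W \<and> card S = s} \<noteq> {}" by auto
  show "finite {S. S \<subseteq> W \<and> card S = s}"
    by (rule finite_subset[of _ "Pow W"]) (use assms in auto)
qed

lemma Iset_mono:
  assumes W: "finite W"
  shows "(\<integral>\<^sup>+I. indicator {I. P I \<and> Q \<inter> I = {}} I \<partial>Iset_pmf n k k' W)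
       \<le> (\<integral>\<^sup>+I. indicator {I. P I} I \<partial>Iset_pmf n k k' (W - Q))"
proof -
  define s where "s = k - k'"
  have W': "finite (W - Q)" using W by auto
  have cW: "card (W - Q) \<le> card W" using W by (simp add: card_mono)
  consider "\<not> s \<le> card W" | "s \<le> card W" "\<not> s \<le> card (W - Q)" | "s \<le> card (W - Q)" by linarith
  then show ?thesis
  proof cases
    case 1
    then have "\<not> s \<le> card (W - Q)" using cW by linarith
    then show ?thesis using 1 unfolding Iset_pmf_def s_def[symmetric]
      by (auto intro!: nn_integral_mono simp: indicator_def)
  next
    case 2
    have "(\<integral>\<^sup>+I. indicator {I. P I \<and> Q \<inter> I = {}} I \<partial>Iset_pmf n k k' W)
        = (\<Sum>S\<in>{S. S \<subseteq> W \<and> card S = s}. indicator {I. P I \<and> Q \<inter> I = {}} S) / of_nat (card {S. S \<subseteq> W \<and> card S = s})"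
      using 2 subsets_ne[OF W, of s] unfolding Iset_pmf_def s_def[symmetric]
      by (simp del: nn_integral_indicator add: nn_integral_pmf_of_set)
    also have "(\<Sum>S\<in>{S. S \<subseteq> W \<and> card S = s}. indicator {I. P I \<and> Q \<inter> I = {}} S) = (0::ennreal)"
    proof (intro sum.neutral ballI)
      fix S assume S: "S \<in> {S. S \<subseteq> W \<and> card S = s}"
      show "indicator {I. P I \<and> Q \<inter> I = {}} S = (0::ennreal)"
      proof (rule ccontr)
        assume "indicator {I. P I \<and> Q \<inter> I = {}} S \<noteq> (0::ennreal)"
        then have "Q \<inter> S = {}" by (auto simp: indicator_def split: if_splits)
        then have "S \<subseteq> W - Q" using S by auto
        then have "card S \<le> card (W - Q)" using W' by (simp add: card_mono)
        then show False using S 2 by auto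
      qed
    qed
    finally show ?thesis by simp
  next
    case 3
    have s3: "s \<le> card W" using 3 cW by linarith
    have "(\<integral>\<^sup>+I. indicator {I. P I \<and> Q \<inter> I = {}} I \<partial>Iset_pmf n k k' W)
        = (\<Sum>S\<in>{S. S \<subseteq> W \<and> card S = s}. indicator {I. P I \<and> Q \<inter> I = {}} S) / of_nat (card {S. S \<subseteq> W \<and> card S = s})"
      using s3 subsets_ne[OF W, of s] unfolding Iset_pmf_def s_def[symmetric]
      by (simp del: nn_integral_indicator add: nn_integral_pmf_of_set)
    also have "(\<Sum>S\<in>{S. S \<subseteq> W \<and> card S = s}. indicator {I. P I \<and> Q \<inter> I = {}} S)
       = (\<Sum>S\<in>{S. S \<subseteq> W - Q \<and> card S = s}. indicator {I. P I} S :: ennreal)"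
      by (rule sum.mono_neutral_cong_right) (use subsets_ne[OF W s3] in \<open>auto simp: indicator_def\<close>)
    also have "\<dots> / of_nat (card {S. S \<subseteq> W \<and> card S = s})
        \<le> \<dots> / of_nat (card {S. S \<subseteq> W - Q \<and> card S = s})"
      apply (rule div_nat_anti)
      using subsets_ne[OF W' 3] subsets_ne[OF W s3] 
       apply (simp add: card_gt_0_iff)
      by (rule card_mono) (use subsets_ne[OF W s3] in auto)
    also have "\<dots> = (\<integral>\<^sup>+I. indicator {I. P I} I \<partial>Iset_pmf n k k' (W - Q))"
      using 3 subsets_ne[OF W', of s] unfolding Iset_pmf_def s_def[symmetric]
      by (simp del: nn_integral_indicator add: nn_integral_pmf_of_set)
    finally show ?thesis .
  qed
qed


definition DQT :: "nat set \<Rightarrow> nat set \<Rightarrow> nat set set" where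
  "DQT Q T = (\<lambda>(q,x). {q,x}) ` (Q \<times> T)"

lemma bad_witness:
  fixes E' :: "nat set set" and v :: "nat \<Rightarrow> nat" and m :: nat
  defines "M \<equiv> v ` {0..<m}"
  assumes I: "I \<subseteq> {0..<n}" "k - k' \<le> card I" and t: "t < k - k'"
    and Q: "Q \<subseteq> {0..<n} - (M \<union> I)" "card Q = t"
    and N: "\<not> t + 1 \<le> card {u \<in> I. \<exists>q \<in> Q. {q, u} \<in> delete_inside (plant m H v E') I}"
  shows "\<exists>T. T \<subseteq> {0..<n} \<and> T \<inter> Q = {} \<and> k - k' \<le> card T + t \<and> T \<subseteq> I \<and> card T + t = card I
     \<and> E' \<inter> DQT Q T = {}"
proof -
  define N where "N = {u \<in> I. \<exists>q \<in> Q. {q, u} \<in> delete_inside (plant m H v E') I}"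
  have fI: "finite I" using I finite_subset by blast
  have NI: "N \<subseteq> I" unfolding N_def by auto
  have cN: "card N \<le> t" using N unfolding N_def by simp
  have "card (I - N) = card I - card N" using NI fI by (simp add: card_Diff_subset finite_subset)
  then have "card I - t \<le> card (I - N)" using cN by simp
  then obtain T where T: "T \<subseteq> I - N" "card T = card I - t"
    using obtain_subset_with_card_n by metis
  have noe: "{q, x} \<notin> E'" if "q \<in> Q" "x \<in> T" for q x
  proof
    assume e: "{q, x} \<in> E'"
    have qI: "q \<notin> I" "q \<notin> M" using Q that by auto
    have "\<not> {q, x} \<subseteq> v ` {0..<m}" using qI M_def by auto
    then have "{q, x} \<in> plant m H v E'" using e unfolding plant_def by auto
    then have "{q, x} \<in> delete_inside (plant m H v E') I" using qI unfolding delete_inside_def by auto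
    then have "x \<in> N" using that T unfolding N_def by auto
    then show False using T that by auto
  qed
  show ?thesis
  proof (intro exI conjI)
    show "T \<subseteq> {0..<n}" "T \<subseteq> I" using T I by auto
    show "T \<inter> Q = {}" using T Q by auto
    show "card T + t = card I" using T I t by simp
    then show "k - k' \<le> card T + t" using I by simp
    show "E' \<inter> DQT Q T = {}" unfolding DQT_def using noe by auto
  qed
qed


lemma card_DQT: "Q \<inter> T = {} \<Longrightarrow> card (DQT Q T) = card Q * card T"
  unfolding DQT_def
  by (subst card_image) (auto simp: inj_on_def doubleton_eq_iff card_cartesian_product)

lemma DQT_sub: "Q \<subseteq> {0..<n} \<Longrightarrow> T \<subseteq> {0..<n} \<Longrightarrow> Q \<inter> T = {} \<Longrightarrow> DQT Q T \<subseteq> all_edges {0..<n}"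
  unfolding DQT_def all_edges_def by (auto 0 4)

lemma W_indep:
  assumes "Q \<inter> v ` {0..<m} = {}"
  shows "no_nbr n (plant m H v E) (v ` {0..<m}) - Q = no_nbr n (plant m H v (E - DQT Q T)) (v ` {0..<m}) - Q"
proof -
  have "{u, w} \<notin> DQT Q T" if "u \<notin> Q" "w \<in> v ` {0..<m}" for u w
    using that assms unfolding DQT_def by (auto simp: doubleton_eq_iff)
  then show ?thesis unfolding no_nbr_def plant_def by auto
qed

lemma Iset_support:
  assumes "finite W" "W \<subseteq> {0..<n}" "k \<le> n" "I \<in> set_pmf (Iset_pmf n k k' W)"
  shows "I \<subseteq> {0..<n} \<and> k - k' \<le> card I"
proof (cases "k - k' \<le> card W")
  case True
  then show ?thesis using assms subsets_ne[OF assms(1) True] unfolding Iset_pmf_def by auto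
next
  case False
  have "k \<le> card {0..<n}" using assms by simp
  then have "{S. S \<subseteq> {0..<n} \<and> card S = k} \<noteq> {}" "finite {S. S \<subseteq> {0..<n} \<and> card S = k}"
    using subsets_ne[of "{0..<n}" k] by auto
  then show ?thesis using assms False unfolding Iset_pmf_def by auto
qed

lemma no_nbr_sub: "no_nbr n E M \<subseteq> {0..<n}" "finite (no_nbr n E M)"
  unfolding no_nbr_def by (auto intro: finite_subset[of _ "{0..<n}"])
lemma count_T:
  assumes "I \<subseteq> {0..<n}" "t \<le> card I" "finite TT"
  shows "(\<Sum>T\<in>TT. indicator {I. T \<subseteq> I \<and> card T + t = card I} I :: ennreal) \<le> of_nat (n ^ t)"
proof -
  have fI: "finite I" using assms finite_subset by blast
  define SI where "SI = {T. T \<subseteq> I \<and> card T = card I - t}"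
  have "(\<Sum>T\<in>TT. indicator {I. T \<subseteq> I \<and> card T + t = card I} I :: ennreal)
      = (\<Sum>T\<in>{T\<in>TT. T \<subseteq> I \<and> card T + t = card I}. 1)"
    using assms(3) by (simp add: sum.inter_filter indicator_def Int_def conj_commute)
  also have "\<dots> = of_nat (card {T\<in>TT. T \<subseteq> I \<and> card T + t = card I})" by simp
  also have "\<dots> \<le> of_nat (card SI)"
    using subsets_ne(2)[OF fI, of "card I - t"] unfolding SI_def
    by (intro of_nat_mono card_mono) auto
  also have "card SI = card I choose t"
    unfolding SI_def using n_subsets[OF fI] binomial_symmetric[OF assms(2)] by simp
  also have "\<dots> \<le> card I ^ t" using binomial_le_pow[OF assms(2)] .
  also have "\<dots> \<le> n ^ t"
    using card_mono[OF _ assms(1)] by (intro power_mono) auto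
  finally show ?thesis by (simp add: of_nat_mono)
qed
lemma inner:
  fixes v :: "nat \<Rightarrow> nat" and m n k k' t :: nat and p \<epsilon> :: real and H :: "nat set set"
  defines "Good \<equiv> {(E, M, I). \<forall>Q. Q \<subseteq> {0..<n} - (M \<union> I) \<and> card Q = t \<and> t < k - k' \<longrightarrow>
               t + 1 \<le> card {u \<in> I. \<exists>q \<in> Q. {q, u} \<in> E}}"
  defines "M \<equiv> v ` {0..<m}"
  defines "QQ \<equiv> {Q. Q \<subseteq> {0..<n} - M \<and> card Q = t}"
  assumes p: "0 \<le> p" "p \<le> 1" and t: "t < k - k'" and kn: "k \<le> n"
    and eps: "\<And>T::nat set. k - k' \<le> card T + t \<Longrightarrow> (1-p)^(t * card T) \<le> \<epsilon>" and eps0: "0 \<le> \<epsilon>"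
  shows "(\<integral>\<^sup>+E'. \<integral>\<^sup>+I. indicator (- Good) (delete_inside (plant m H v E') I, M, I)
            \<partial>Iset_pmf n k k' (no_nbr n (plant m H v E') M) \<partial>gnp_pmf n p)
         \<le> of_nat (card QQ) * (ennreal \<epsilon> * of_nat (n ^ t))"
proof -
  define TT where "TT (Q::nat set) = {T. T \<subseteq> {0..<n} \<and> T \<inter> Q = {} \<and> k - k' \<le> card T + t}" for Q
  define a where "a Q T (I::nat set) = (indicator {I. (T \<subseteq> I \<and> card T + t = card I) \<and> Q \<inter> I = {}} I :: ennreal)" for Q T I
  define a' where "a' (T::nat set) (I::nat set) = (indicator {I. T \<subseteq> I \<and> card T + t = card I} I :: ennreal)" for T I
  define b where "b Q T (E::nat set set) = (indicator {E. E \<inter> DQT Q T = {}} E :: ennreal)" for Q T E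
  define W where "W E = no_nbr n (plant m H v E) M" for E
  define G where "G Q T E = (\<integral>\<^sup>+I. a' T I \<partial>Iset_pmf n k k' (W E - Q))" for Q T E
  have finQQ: "finite QQ" unfolding QQ_def by (rule finite_subset[of _ "Pow {0..<n}"]) auto
  have finTT: "finite (TT Q)" for Q unfolding TT_def by (rule finite_subset[of _ "Pow {0..<n}"]) auto
  have step1: "indicator (- Good) (delete_inside (plant m H v E') I, M, I)
      \<le> (\<Sum>Q\<in>QQ. \<Sum>T\<in>TT Q. a Q T I * b Q T E')"
    if I: "I \<subseteq> {0..<n}" "k - k' \<le> card I" for E' I
  proof (cases "(delete_inside (plant m H v E') I, M, I) \<in> Good")
    case True then show ?thesis by simp
  next
    case False
    then obtain Q where Q: "Q \<subseteq> {0..<n} - (M \<union> I)" "card Q = t"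
      "\<not> t + 1 \<le> card {u \<in> I. \<exists>q \<in> Q. {q, u} \<in> delete_inside (plant m H v E') I}"
      unfolding Good_def using t by auto
    obtain T where T: "T \<subseteq> {0..<n}" "T \<inter> Q = {}" "k - k' \<le> card T + t" "T \<subseteq> I" "card T + t = card I"
      "E' \<inter> DQT Q T = {}"
      using bad_witness[OF I t Q[unfolded M_def]] by blast
    have QQ: "Q \<in> QQ" using Q unfolding QQ_def by auto
    have TT: "T \<in> TT Q" using T unfolding TT_def by auto
    have QI: "Q \<inter> I = {}" using Q by auto
    have "a Q T I * b Q T E' = 1" using T QI unfolding a_def b_def by (simp add: indicator_def)
    then have "1 \<le> (\<Sum>T\<in>TT Q. a Q T I * b Q T E')"
      using member_le_sum[OF TT, of "\<lambda>T. a Q T I * b Q T E'"] finTT by simp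
    also have "\<dots> \<le> (\<Sum>Q\<in>QQ. \<Sum>T\<in>TT Q. a Q T I * b Q T E')"
      using member_le_sum[OF QQ, of "\<lambda>Q. \<Sum>T\<in>TT Q. a Q T I * b Q T E'"] finQQ by simp
    finally show ?thesis by (simp add: indicator_def)
  qed
  have "(\<integral>\<^sup>+E'. \<integral>\<^sup>+I. indicator (- Good) (delete_inside (plant m H v E') I, M, I)
            \<partial>Iset_pmf n k k' (W E') \<partial>gnp_pmf n p)
      \<le> (\<integral>\<^sup>+E'. \<integral>\<^sup>+I. (\<Sum>Q\<in>QQ. \<Sum>T\<in>TT Q. a Q T I * b Q T E') \<partial>Iset_pmf n k k' (W E') \<partial>gnp_pmf n p)"
  proof (rule nn_integral_mono)
    fix E'
    show "(\<integral>\<^sup>+I. indicator (- Good) (delete_inside (plant m H v E') I, M, I) \<partial>Iset_pmf n k k' (W E'))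
       \<le> (\<integral>\<^sup>+I. (\<Sum>Q\<in>QQ. \<Sum>T\<in>TT Q. a Q T I * b Q T E') \<partial>Iset_pmf n k k' (W E'))"
    proof (rule nn_integral_mono_AE)
      show "AE I in measure_pmf (Iset_pmf n k k' (W E')).
         indicator (- Good) (delete_inside (plant m H v E') I, M, I) \<le> (\<Sum>Q\<in>QQ. \<Sum>T\<in>TT Q. a Q T I * b Q T E')"
        unfolding AE_measure_pmf_iff using Iset_support[OF no_nbr_sub(2) no_nbr_sub(1) kn] step1
        unfolding W_def by blast
    qed
  qed
  also have "\<dots> = (\<integral>\<^sup>+E'. (\<Sum>Q\<in>QQ. \<Sum>T\<in>TT Q. (\<integral>\<^sup>+I. a Q T I \<partial>Iset_pmf n k k' (W E')) * b Q T E') \<partial>gnp_pmf n p)"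
    by (intro nn_integral_cong) (simp add: nn_integral_sum finTT finQQ nn_integral_multc)
  also have "\<dots> \<le> (\<integral>\<^sup>+E'. (\<Sum>Q\<in>QQ. \<Sum>T\<in>TT Q. G Q T E' * b Q T E') \<partial>gnp_pmf n p)"
    unfolding G_def a_def a'_def
    by (intro nn_integral_mono sum_mono mult_right_mono Iset_mono) (auto simp: W_def no_nbr_sub)
  also have "\<dots> = (\<Sum>Q\<in>QQ. \<Sum>T\<in>TT Q. \<integral>\<^sup>+E'. G Q T E' * b Q T E' \<partial>gnp_pmf n p)"
    by (simp add: nn_integral_sum finTT finQQ)
  also have "\<dots> = (\<Sum>Q\<in>QQ. \<Sum>T\<in>TT Q. (\<integral>\<^sup>+E'. G Q T E' \<partial>gnp_pmf n p) * ennreal ((1-p) ^ card (DQT Q T)))"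
  proof (intro sum.cong refl)
    fix Q T assume Q: "Q \<in> QQ" and T: "T \<in> TT Q"
    show "(\<integral>\<^sup>+E'. G Q T E' * b Q T E' \<partial>gnp_pmf n p) = (\<integral>\<^sup>+E'. G Q T E' \<partial>gnp_pmf n p) * ennreal ((1-p) ^ card (DQT Q T))"
      unfolding b_def
    proof (rule gnp_indep[OF _ p])
      show "DQT Q T \<subseteq> all_edges {0..<n}" using Q T unfolding QQ_def TT_def by (intro DQT_sub) auto
      fix E
      have "Q \<inter> v ` {0..<m} = {}" using Q unfolding QQ_def M_def by auto
      then show "G Q T E = G Q T (E - DQT Q T)"
        unfolding G_def W_def M_def using W_indep by metis
    qed
  qed
  also have "\<dots> \<le> (\<Sum>Q\<in>QQ. \<Sum>T\<in>TT Q. (\<integral>\<^sup>+E'. G Q T E' \<partial>gnp_pmf n p) * ennreal \<epsilon>)"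
  proof (intro sum_mono mult_left_mono ennreal_leI)
    fix Q T assume Q: "Q \<in> QQ" and T: "T \<in> TT Q"
    have "card (DQT Q T) = t * card T" using Q T card_DQT[of Q T] unfolding QQ_def TT_def by auto
    moreover have "k - k' \<le> card T + t" using T unfolding TT_def by auto
    then have "(1 - p) ^ (t * card T) \<le> \<epsilon>" by (rule eps)
    ultimately show "(1 - p) ^ card (DQT Q T) \<le> \<epsilon>" by simp
  qed auto
  also have "\<dots> = (\<Sum>Q\<in>QQ. (\<integral>\<^sup>+E'. (\<Sum>T\<in>TT Q. G Q T E') \<partial>gnp_pmf n p) * ennreal \<epsilon>)"
    by (simp add: nn_integral_sum finTT sum_distrib_right)
  also have "\<dots> \<le> (\<Sum>Q\<in>QQ. of_nat (n ^ t) * ennreal \<epsilon>)"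
  proof (intro sum_mono mult_right_mono)
    fix Q assume Q: "Q \<in> QQ"
    have "(\<integral>\<^sup>+E'. (\<Sum>T\<in>TT Q. G Q T E') \<partial>gnp_pmf n p) \<le> (\<integral>\<^sup>+E'. of_nat (n ^ t) \<partial>gnp_pmf n p)"
    proof (intro nn_integral_mono)
      fix E'
      have "(\<Sum>T\<in>TT Q. G Q T E') = (\<integral>\<^sup>+I. (\<Sum>T\<in>TT Q. a' T I) \<partial>Iset_pmf n k k' (W E' - Q))"
        unfolding G_def by (simp add: nn_integral_sum finTT)
      also have "\<dots> \<le> (\<integral>\<^sup>+I. of_nat (n ^ t) \<partial>Iset_pmf n k k' (W E' - Q))"
      proof (intro nn_integral_mono_AE)
        have "finite (W E' - Q)" "W E' - Q \<subseteq> {0..<n}" unfolding W_def using no_nbr_sub by auto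
        note fs = this
        show "AE I in measure_pmf (Iset_pmf n k k' (W E' - Q)). (\<Sum>T\<in>TT Q. a' T I) \<le> of_nat (n ^ t)"
          unfolding AE_measure_pmf_iff a'_def
        proof
          fix I assume "I \<in> set_pmf (Iset_pmf n k k' (W E' - Q))"
          then have I: "I \<subseteq> {0..<n} \<and> k - k' \<le> card I" by (rule Iset_support[OF fs kn])
          then have "t \<le> card I" using t by linarith
          then show "(\<Sum>T\<in>TT Q. indicator {I. T \<subseteq> I \<and> card T + t = card I} I) \<le> (of_nat (n ^ t) :: ennreal)"
            using I count_T[OF _ _ finTT] by blast
        qed
      qed
      also have "\<dots> = of_nat (n ^ t)" by (simp add: measure_pmf.emeasure_space_1)
      finally show "(\<Sum>T\<in>TT Q. G Q T E') \<le> of_nat (n ^ t)" .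
    qed
    then show "(\<integral>\<^sup>+E'. (\<Sum>T\<in>TT Q. G Q T E') \<partial>gnp_pmf n p) \<le> of_nat (n ^ t)"
      by (simp add: measure_pmf.emeasure_space_1)
  qed auto
  also have "\<dots> = of_nat (card QQ) * (ennreal \<epsilon> * of_nat (n ^ t))"
    by (simp add: mult.commute)
  finally show ?thesis unfolding W_def .
qed
lemma eps_bound:
  fixes n s t c :: nat and p \<delta> :: real
  assumes n: "1 \<le> n" and d: "\<delta> < 1" and p: "p = real n powr (\<delta> - 1)"
    and s: "real s \<ge> 6 * real n powr (1 - \<delta>) * ln (real n)" and t: "real t \<le> real s / 2"
    and c: "s \<le> c + t"
  shows "(1 - p) ^ (t * c) \<le> 1 / real n ^ (3 * t)"
proof -
  have p0: "0 \<le> p" using p by simp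
  have p1: "p \<le> 1" using p n d powr_mono[of "\<delta> - 1" 0 "real n"] by simp
  have ln0: "0 \<le> ln (real n)" using n by simp
  have "p * real s \<ge> p * (6 * real n powr (1 - \<delta>) * ln (real n))"
    using s p0 by (simp add: mult_left_mono)
  moreover have "p * (6 * real n powr (1 - \<delta>) * ln (real n)) = 6 * ln (real n)"
  proof -
    have "p * real n powr (1 - \<delta>) = 1" using p n by (simp add: powr_add[symmetric])
    then show ?thesis by (metis mult.assoc mult.commute mult.left_commute mult_1)
  qed
  ultimately have ps: "p * real s \<ge> 6 * ln (real n)" by simp
  have cs: "real c \<ge> real s / 2" using c t by linarith
  have "p * real (t * c) \<ge> p * real t * (real s / 2)"
    using cs p0 by (simp add: mult.assoc mult_left_mono)
  also have "p * real t * (real s / 2) = real t * (p * real s) / 2" by simp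
  finally have "p * real (t * c) \<ge> real t * (6 * ln (real n)) / 2"
    using ps by (smt (verit) divide_right_mono mult_left_mono of_nat_0_le_iff)
  then have key: "p * real (t * c) \<ge> real (3 * t) * ln (real n)" by simp
  have "(1 - p) ^ (t * c) \<le> exp (- p) ^ (t * c)"
    using p1 by (intro power_mono) (auto simp: exp_ge_add_one_self[of "-p", simplified])
  also have "\<dots> = exp (- (p * real (t * c)))" by (simp add: exp_of_nat_mult[symmetric] mult.commute)
  also have "\<dots> \<le> exp (- (real (3 * t) * ln (real n)))" using key by simp
  also have "\<dots> = 1 / real n ^ (3 * t)"
  proof -
    have "exp (real (3 * t) * ln (real n)) = real n ^ (3 * t)"
      by (subst exp_of_nat_mult) (use n in simp)
    then show ?thesis by (simp add: exp_minus inverse_eq_divide)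
  qed
  finally show ?thesis .
qed

theorem lemmaC5:
  fixes n m k k' t :: nat and \<delta> p :: real and H :: "nat set set"
  assumes "0 < \<delta>" "\<delta> < 1"
    and "p = real n powr (\<delta> - 1)"
    and "H \<subseteq> all_edges {0..<m}"
    and "m dvd n"
    and "k' \<le> m" "k' \<le> k" "k \<le> n - m"
    and "real (k - k') \<ge> 6 * real n powr (1 - \<delta>) * ln (real n)"
    and "1 \<le> t" "real t \<le> real (k - k') / 2"
  shows "measure_pmf.prob (GH_pmf n m H p k k')
           {(E, M, I). \<forall>Q. Q \<subseteq> {0..<n} - (M \<union> I) \<and> card Q = t \<and> t < k - k' \<longrightarrow>
               t + 1 \<le> card {u \<in> I. \<exists>q \<in> Q. {q, u} \<in> E}}
         \<ge> 1 - 2 / real n"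
proof -
  define Good where "Good = {(E, M, I). \<forall>Q. Q \<subseteq> {0..<n} - (M \<union> I) \<and> card Q = t \<and> t < k - k' \<longrightarrow>
               t + 1 \<le> card {u \<in> I. \<exists>q \<in> Q. {q, u} \<in> (E::nat set set)}}"
  define \<epsilon> where "\<epsilon> = 1 / real n ^ (3 * t)"
  have tlt: "t < k - k'" using assms(10,11) by linarith
  have kn: "k \<le> n" using assms(8) by linarith
  have n1: "1 \<le> n" using tlt kn by linarith
  have p0: "0 \<le> p" using assms(3) by simp
  have p1: "p \<le> 1" using assms(2,3) n1 powr_mono[of "\<delta> - 1" 0 "real n"] by simp
  have eps: "(1-p)^(t * card T) \<le> \<epsilon>" if "k - k' \<le> card T + t" for T :: "nat set"
    unfolding \<epsilon>_def using eps_bound[OF n1 assms(2,3,9,11) that] .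
  have eps0: "0 \<le> \<epsilon>" unfolding \<epsilon>_def by simp
  have bound_v: "(\<integral>\<^sup>+E'. \<integral>\<^sup>+I. indicator (- Good) (delete_inside (plant m H v E') I, v ` {0..<m}, I)
            \<partial>Iset_pmf n k k' (no_nbr n (plant m H v E') (v ` {0..<m})) \<partial>gnp_pmf n p)
         \<le> ennreal (1 / real n)" for v :: "nat \<Rightarrow> nat"
  proof -
    define QQ where "QQ = {Q. Q \<subseteq> {0..<n} - v ` {0..<m} \<and> card Q = t}"
    have "card QQ \<le> card {Q. Q \<subseteq> {0..<n} \<and> card Q = t}"
      unfolding QQ_def by (rule card_mono) (auto intro: subsets_ne(2))
    also have "\<dots> = n choose t" using n_subsets[of "{0..<n}" t] by simp
    also have "\<dots> \<le> n ^ t" using binomial_le_pow tlt kn by simp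
    finally have cQ: "card QQ \<le> n ^ t" .
    have "(\<integral>\<^sup>+E'. \<integral>\<^sup>+I. indicator (- Good) (delete_inside (plant m H v E') I, v ` {0..<m}, I)
            \<partial>Iset_pmf n k k' (no_nbr n (plant m H v E') (v ` {0..<m})) \<partial>gnp_pmf n p)
         \<le> of_nat (card QQ) * (ennreal \<epsilon> * of_nat (n ^ t))"
      unfolding Good_def QQ_def by (rule inner[OF p0 p1 tlt kn eps eps0])
    also have "\<dots> = ennreal (real (card QQ) * \<epsilon> * real (n ^ t))"
      using eps0 by (simp add: ennreal_mult ennreal_of_nat_eq_real_of_nat mult.assoc)
    also have "\<dots> \<le> ennreal (1 / real n)"
    proof (rule ennreal_leI)
      have "real (card QQ) * \<epsilon> * real (n ^ t) \<le> real (n ^ t) * \<epsilon> * real (n ^ t)"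
        using cQ eps0 by (intro mult_right_mono) auto
      also have "\<dots> = 1 / real n ^ t"
      proof -
        define x where "x = real n ^ t"
        have x0: "x > 0" unfolding x_def using n1 by simp
        have e3: "real n ^ (3 * t) = x ^ 3" unfolding x_def by (simp add: power_mult[symmetric] mult.commute)
        have e1: "real (n ^ t) = x" unfolding x_def by simp
        show ?thesis unfolding \<epsilon>_def e3 e1 x_def[symmetric] using x0 by (simp add: power3_eq_cube)
      qed
      also have "\<dots> \<le> 1 / real n ^ 1"
        using n1 assms(10) by (intro divide_left_mono power_increasing) auto
      finally show "real (card QQ) * \<epsilon> * real (n ^ t) \<le> 1 / real n" by simp
    qed
    finally show ?thesis .
  qed
  have "emeasure (measure_pmf (GH_pmf n m H p k k')) (- Good)
      = (\<integral>\<^sup>+x. indicator (- Good) x \<partial>GH_pmf n m H p k k')" by simp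
  also have "\<dots> = (\<integral>\<^sup>+v. \<integral>\<^sup>+E'. \<integral>\<^sup>+I. indicator (- Good) (delete_inside (plant m H v E') I, v ` {0..<m}, I)
            \<partial>Iset_pmf n k k' (no_nbr n (plant m H v E') (v ` {0..<m})) \<partial>gnp_pmf n p
            \<partial>pmf_of_set (PiE {0..<m} (part n m)))"
    unfolding GH_pmf_def by (subst bind_commute_pmf) (simp add: Let_def)
  also have "\<dots> \<le> (\<integral>\<^sup>+v. ennreal (1 / real n) \<partial>pmf_of_set (PiE {0..<m} (part n m)))"
    by (intro nn_integral_mono bound_v)
  also have "\<dots> = ennreal (1 / real n)" by (simp add: measure_pmf.emeasure_space_1)
  finally have "ennreal (measure_pmf.prob (GH_pmf n m H p k k') (- Good)) \<le> ennreal (1 / real n)"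
    by (simp add: measure_pmf.emeasure_eq_measure)
  then have bad: "measure_pmf.prob (GH_pmf n m H p k k') (- Good) \<le> 1 / real n"
    using n1 by (simp add: ennreal_le_iff)
  have "measure_pmf.prob (GH_pmf n m H p k k') Good = 1 - measure_pmf.prob (GH_pmf n m H p k k') (- Good)"
    using measure_pmf.prob_compl[of "- Good" "GH_pmf n m H p k k'"] by (simp add: Compl_eq_Diff_UNIV double_diff)
  also have "\<dots> \<ge> 1 - 2 / real n" using bad n1 by (simp add: field_simps)
  finally show ?thesis unfolding Good_def .
qed

end
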